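(* Let $K$ and $K'$ be two non-degenerate CMIs, with $\mathrm{can}(\mathrm{pur}(K))=(C,\langle\mathbb I_K,\mathbb I_K,P_i,1\le i\le t\rangle)$ and $\mathrm{can}(\mathrm{pur}(K'))=(C',\langle\mathbb I_{K'},\mathbb I_{K'},P'_j,1\le j\le s\rangle)$. If $K$ implies $K'$, then $\mathbb I_{K'}\subseteq\mathbb I_K$.
   Context: Setting: $X_1,\dots,X_n$ jointly distributed discrete random variables with $H(X_i)<\infty$; distribution unspecified. $X_\alpha=(X_i,i\in\alpha)$, $X_\emptyset$ constant. A CMI is $K=(C,\langle Q_1,\dots,Q_k\rangle)$, $k\ge0$, $C\subseteq\{1,\dots,n\}$, $\langle\cdot\rangle$ an unordered multiset of subsets; valid (for a given distribution) if $\sum_iH(X_{Q_i}|X_C)-H(X_{Q_1},\dots,X_{Q_k}|X_C)=0$. Empty members may be deleted. Degenerate = valid for every distribution, written $(\cdot,\langle\ \rangle)$. "$K$ implies $K'$": for every joint distribution, if $K$ is valid then $K'$ is valid. $\mathrm{pur}(K)=(C,\langle Q_i\setminus C:Q_i\setminus C\ne\emptyset\rangle)$. For pure $K$: $\mathbb I_K$ = indices lying in at least two members of the collection if $k\ge2$, else $\emptyset$; $P_1,\dots,P_t$ the nonempty sets among $Q_i\setminus\mathbb I_K$; $\mathrm{can}(K)=(\cdot,\langle\ \rangle)$ if $k\le1$, $(C,\langle\mathbb I_K,\mathbb I_K\rangle)$ if $k\ge2,\mathbb I_K\ne\emptyset,t\le1$, $(C,\langle P_1..P_t\rangle)$ if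 $k\ge2,\mathbb I_K=\emptyset$, $(C,\langle\mathbb I_K,\mathbb I_K,P_1..P_t\rangle)$ if $k\ge2,\mathbb I_K\ne\emptyset,t\ge2$. For a general CMI $K$, $\mathbb I_K$ is the repeated-index set of $\mathrm{pur}(K)$. General-form notation: copies of $\mathbb I_K$ omitted when empty, $t=0$ for the case $(C,\langle\mathbb I_K,\mathbb I_K\rangle)$. *)

theory Defs
  imports "HOL-Analysis.Analysis" "HOL-Probability.Probability" "HOL-Library.Multiset"
begin

text \<open>A joint distribution of X_1,...,X_n (discrete, values coded in nat) is a pmf on
  nat \<Rightarrow> nat; coordinate i is X_i (only i in {1..n} matter).\<close>

type_synonym jdist = "(nat \<Rightarrow> nat) pmf"

type_synonym cmi = "nat set \<times> nat set multiset"

definition marg :: "jdist \<Rightarrow> nat set \<Rightarrow> (nat \<Rightarrow> nat) pmf" where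
  "marg p \<alpha> = map_pmf (\<lambda>\<omega> i. if i \<in> \<alpha> then \<omega> i else 0) p"

definition ent_terms :: "'a pmf \<Rightarrow> 'a \<Rightarrow> real" where
  "ent_terms q x = - pmf q x * log 2 (pmf q x)"

definition entropy_pmf :: "'a pmf \<Rightarrow> real" where
  "entropy_pmf q = infsum (ent_terms q) UNIV"

definition finite_entropy :: "'a pmf \<Rightarrow> bool" where
  "finite_entropy q \<longleftrightarrow> ent_terms q summable_on UNIV"

definition H :: "jdist \<Rightarrow> nat set \<Rightarrow> real" where
  "H p \<alpha> = entropy_pmf (marg p \<alpha>)"

definition admissible :: "nat \<Rightarrow> jdist \<Rightarrow> bool" where
  "admissible n p \<longleftrightarrow> (\<forall>i\<in>{1..n}. finite_entropy (marg p {i}))"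

definition cmi_on :: "nat \<Rightarrow> cmi \<Rightarrow> bool" where
  "cmi_on n K \<longleftrightarrow> fst K \<subseteq> {1..n} \<and> (\<forall>Q\<in>#snd K. Q \<subseteq> {1..n})"

definition valid :: "jdist \<Rightarrow> cmi \<Rightarrow> bool" where
  "valid p K \<longleftrightarrow>
     (let C = fst K; Qs = snd K in
       (\<Sum>Q\<in>#Qs. H p (Q \<union> C) - H p C) - (H p (\<Union>(set_mset Qs) \<union> C) - H p C) = 0)"

definition degenerate :: "nat \<Rightarrow> cmi \<Rightarrow> bool" where
  "degenerate n K \<longleftrightarrow> (\<forall>p. admissible n p \<longrightarrow> valid p K)"

definition cmi_implies :: "nat \<Rightarrow> cmi \<Rightarrow> cmi \<Rightarrow> bool" where
  "cmi_implies n K K' \<longleftrightarrow> (\<forall>p. admissible n p \<longrightarrow> valid p K \<longrightarrow> valid p K')"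

definition pur :: "cmi \<Rightarrow> cmi" where
  "pur K = (fst K, image_mset (\<lambda>Q. Q - fst K) (filter_mset (\<lambda>Q. Q - fst K \<noteq> {}) (snd K)))"

definition rep_pure :: "cmi \<Rightarrow> nat set" where
  "rep_pure K = (if size (snd K) \<ge> 2
     then {i. size (filter_mset (\<lambda>Q. i \<in> Q) (snd K)) \<ge> 2} else {})"

definition rep_idx :: "cmi \<Rightarrow> nat set" where
  "rep_idx K = rep_pure (pur K)"

end

theory Submission
  imports Defs
begin

lemma ent_fin:
  assumes "finite (set_pmf q)"
  shows "entropy_pmf q = (\<Sum>x\<in>set_pmf q. ent_terms q x)" and "finite_entropy q"
proof -
  have z: "\<And>x. x \<notin> set_pmf q \<Longrightarrow> ent_terms q x = 0"
    by (simp add: ent_terms_def set_pmf_iff)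
  have "infsum (ent_terms q) UNIV = infsum (ent_terms q) (set_pmf q)"
    by (rule infsum_cong_neutral) (use z in auto)
  then show "entropy_pmf q = (\<Sum>x\<in>set_pmf q. ent_terms q x)"
    using assms by (simp add: entropy_pmf_def)
  have "ent_terms q summable_on UNIV \<longleftrightarrow> ent_terms q summable_on (set_pmf q)"
    by (rule summable_on_cong_neutral) (use z in auto)
  then show "finite_entropy q" using assms by (simp add: finite_entropy_def)
qed

definition f1 :: "nat \<Rightarrow> nat \<Rightarrow> nat" where "f1 i = (\<lambda>j. if j = i then 1 else 0)"
definition pp :: "nat \<Rightarrow> jdist" where "pp i = pmf_of_set {(\<lambda>_. 0), f1 i}"

lemma f1_ne: "(\<lambda>_. 0) \<noteq> f1 i"
  by (metis f1_def zero_neq_one)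

lemma set_pp: "set_pmf (pp i) = {(\<lambda>_. 0), f1 i}"
  by (simp add: pp_def)

lemma marg_in: "i \<in> A \<Longrightarrow> marg (pp i) A = pp i"
proof -
  assume "i \<in> A"
  have "marg (pp i) A = map_pmf id (pp i)"
    unfolding marg_def
    by (rule map_pmf_cong) (use \<open>i \<in> A\<close> in \<open>auto simp: set_pp f1_def fun_eq_iff\<close>)
  then show ?thesis by simp
qed

lemma marg_out: "i \<notin> A \<Longrightarrow> marg (pp i) A = return_pmf (\<lambda>_. 0)"
proof -
  assume "i \<notin> A"
  have "marg (pp i) A = map_pmf (\<lambda>_. (\<lambda>_. 0)) (pp i)"
    unfolding marg_def
    by (rule map_pmf_cong) (use \<open>i \<notin> A\<close> in \<open>auto simp: set_pp f1_def fun_eq_iff\<close>)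
  then show ?thesis by simp
qed

lemma ent_ret: "entropy_pmf (return_pmf x) = 0" "finite_entropy (return_pmf x)"
  using ent_fin[of "return_pmf x"] by (auto simp: ent_terms_def)

lemma ent_pp: "entropy_pmf (pp i) = 1" "finite_entropy (pp i)"
proof -
  have c: "card {(\<lambda>_. 0::nat), f1 i} = 2" using f1_ne[of i] by simp
  have "entropy_pmf (pp i) = (\<Sum>x\<in>{(\<lambda>_. 0), f1 i}. ent_terms (pp i) x)"
    using ent_fin(1)[of "pp i"] by (simp add: set_pp)
  also have "\<dots> = 1"
    using f1_ne[of i] c by (simp add: ent_terms_def pp_def log_divide)
  finally show "entropy_pmf (pp i) = 1" .
  show "finite_entropy (pp i)" using ent_fin(2)[of "pp i"] by (simp add: set_pp)
qed

lemma H_pp: "H (pp i) A = (if i \<in> A then 1 else 0)"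
  by (simp add: H_def marg_in marg_out ent_pp ent_ret)

lemma adm_pp: "admissible n (pp i)"
  unfolding admissible_def
  by (metis ent_pp(2) ent_ret(2) marg_in marg_out)

definition cnt :: "cmi \<Rightarrow> nat \<Rightarrow> nat" where
  "cnt K i = size (filter_mset (\<lambda>Q. i \<in> Q) (snd K))"

lemma sum_ind: "(\<Sum>Q\<in>#M. (if i \<in> Q then 1 else 0 :: real)) = real (size (filter_mset (\<lambda>Q. i \<in> Q) M))"
  by (induction M) auto

lemma valid_pp:
  assumes "i \<notin> fst K"
  shows "valid (pp i) K \<longleftrightarrow> cnt K i \<le> 1"
proof -
  obtain C Qs where K: "K = (C, Qs)" by fastforce
  have iC: "i \<notin> C" using assms K by simp
  have e: "(\<Sum>Q\<in>#Qs. H (pp i) (Q \<union> C) - H (pp i) C) = real (cnt K i)"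
    using sum_ind[of i Qs] iC by (simp add: H_pp K cnt_def)
  have ex: "(i \<in> \<Union>(set_mset Qs)) \<longleftrightarrow> cnt K i > 0"
  proof
    assume "i \<in> \<Union>(set_mset Qs)"
    then obtain Q where "Q \<in># Qs" "i \<in> Q" by auto
    then have "Q \<in># filter_mset (\<lambda>Q. i \<in> Q) Qs" by simp
    then show "cnt K i > 0" unfolding K cnt_def by (metis empty_iff set_mset_empty size_eq_0_iff_empty gr0I snd_conv)
  next
    assume "cnt K i > 0"
    then have "filter_mset (\<lambda>Q. i \<in> Q) Qs \<noteq> {#}" by (intro notI) (simp add: K cnt_def)
    then obtain Q where "Q \<in># filter_mset (\<lambda>Q. i \<in> Q) Qs" by blast
    then show "i \<in> \<Union>(set_mset Qs)" by auto
  qed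
  show ?thesis
    unfolding valid_def using e ex iC by (auto simp: K H_pp Let_def)
qed

lemma cnt_pur: "i \<notin> fst K \<Longrightarrow> size (filter_mset (\<lambda>Q. i \<in> Q) (snd (pur K))) = cnt K i"
  unfolding pur_def cnt_def
  by (simp add: filter_mset_image_mset filter_filter_mset) (rule arg_cong[where f=size], rule filter_mset_cong, auto)

lemma rep_in:
  assumes "i \<in> rep_idx K" shows "i \<notin> fst K" "cnt K i \<ge> 2"
proof -
  have s: "size (filter_mset (\<lambda>Q. i \<in> Q) (snd (pur K))) \<ge> 2"
    using assms by (auto simp: rep_idx_def rep_pure_def split: if_splits)
  then have "filter_mset (\<lambda>Q. i \<in> Q) (snd (pur K)) \<noteq> {#}" by (intro notI) simp
  then obtain Q where "Q \<in># filter_mset (\<lambda>Q. i \<in> Q) (snd (pur K))" by blast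
  then show "i \<notin> fst K" by (auto simp: pur_def)
  then show "cnt K i \<ge> 2" using s cnt_pur by simp
qed

lemma rep_out:
  assumes "i \<notin> rep_idx K" "i \<notin> fst K" shows "cnt K i \<le> 1"
proof (cases "size (snd (pur K)) \<ge> 2")
  case True
  then show ?thesis using assms cnt_pur[of i K]
    by (simp add: rep_idx_def rep_pure_def)
next
  case False
  have "size (filter_mset (\<lambda>Q. i \<in> Q) (snd (pur K))) \<le> size (snd (pur K))"
    by (rule size_filter_mset_lesseq)
  then show ?thesis using False assms cnt_pur[of i K] by simp
qed

theorem mainTheorem7:
  fixes n :: nat and K K' :: cmi
  assumes "cmi_on n K" and "cmi_on n K'"
    and "\<not> degenerate n K" and "\<not> degenerate n K'"
    and "cmi_implies n K K'"
  shows "rep_idx K' \<subseteq> rep_idx K"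
proof
  fix i assume i: "i \<in> rep_idx K'"
  show "i \<in> rep_idx K"
  proof (rule ccontr)
    assume ni: "i \<notin> rep_idx K"
    have vK: "valid (pp i) K"
    proof (cases "i \<in> fst K")
      case True
      then show ?thesis by (simp add: valid_def H_pp Let_def)
    next
      case False
      then show ?thesis using valid_pp rep_out ni by blast
    qed
    have "valid (pp i) K'" using assms(5) adm_pp vK by (simp add: cmi_implies_def)
    then show False using valid_pp[of i K'] rep_in[OF i] by simp
  qed
qed

end
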